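(* Let $(A_i,\gamma_i)_{i\in I}$ be a family of quasiordered sets with all $A_i$ nonempty, and let $j,k\in I$, $j\neq k$, be such that there exist $a_j,b_j,c_j\in A_j$ with $a_j\neq c_j$, $(a_j,c_j)\in\gamma_j$, $(a_j,b_j)\notin\gamma_j$, and such that $\gamma_k\neq A_k\times A_k$ (with $|A_k|>1$). Then the product quasiorder $\prod_{i\in I}\gamma_i$ is not a half-space on $\prod_{i\in I}A_i$.
   Context: A quasiorder on $A$ is a reflexive and transitive relation; $\Delta_A=\{(a,a)\mid a\in A\}$. A quasiorder $\alpha$ on $A$ is a half-space if there is a quasiorder $\beta$ on $A$ with $\alpha\cup\beta=A\times A$ and $\alpha\cap\beta=\Delta_A$. The direct product quasiorder is $\prod_{i\in I}\gamma_i=\{(\underline a,\underline b)\mid \underline a,\underline b\in\prod_{i\in I}A_i,\ (\underline a(i),\underline b(i))\in\gamma_i \text{ for all } i\in I\}$. *)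

theory Defs
  imports "HOL-Library.FuncSet"
begin

definition quasiorder_on :: "'a set \<Rightarrow> ('a \<times> 'a) set \<Rightarrow> bool" where
  "quasiorder_on A r \<longleftrightarrow> r \<subseteq> A \<times> A \<and> refl_on A r \<and> trans r"

definition half_space :: "'a set \<Rightarrow> ('a \<times> 'a) set \<Rightarrow> bool" where
  "half_space A \<alpha> \<longleftrightarrow> quasiorder_on A \<alpha> \<and>
     (\<exists>\<beta>. quasiorder_on A \<beta> \<and> \<alpha> \<union> \<beta> = A \<times> A \<and> \<alpha> \<inter> \<beta> = Id_on A)"

definition prod_qo :: "'i set \<Rightarrow> ('i \<Rightarrow> 'a set) \<Rightarrow> ('i \<Rightarrow> ('a \<times> 'a) set) \<Rightarrow> (('i \<Rightarrow> 'a) \<times> ('i \<Rightarrow> 'a)) set" where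
  "prod_qo I A \<gamma> = {(a, b). a \<in> PiE I A \<and> b \<in> PiE I A \<and> (\<forall>i\<in>I. (a i, b i) \<in> \<gamma> i)}"

end

theory Submission
  imports Defs
begin

theorem lemma3p1:
  fixes I :: "'i set" and A :: "'i \<Rightarrow> 'a set" and \<gamma> :: "'i \<Rightarrow> ('a \<times> 'a) set"
    and j k :: 'i and aj bj cj :: 'a
  assumes qo: "\<And>i. i \<in> I \<Longrightarrow> quasiorder_on (A i) (\<gamma> i)"
    and ne: "\<And>i. i \<in> I \<Longrightarrow> A i \<noteq> {}"
    and jI: "j \<in> I" and kI: "k \<in> I" and jk: "j \<noteq> k"
    and abc: "aj \<in> A j" "bj \<in> A j" "cj \<in> A j"
    and ac_ne: "aj \<noteq> cj" and ac: "(aj, cj) \<in> \<gamma> j" and ab: "(aj, bj) \<notin> \<gamma> j"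
    and k_nontriv: "\<gamma> k \<noteq> A k \<times> A k"
  shows "\<not> half_space (PiE I A) (prod_qo I A \<gamma>)"
proof
  assume hs: "half_space (PiE I A) (prod_qo I A \<gamma>)"
  then obtain \<beta> where bq: "quasiorder_on (PiE I A) \<beta>"
    and un: "prod_qo I A \<gamma> \<union> \<beta> = PiE I A \<times> PiE I A"
    and it: "prod_qo I A \<gamma> \<inter> \<beta> = Id_on (PiE I A)"
    unfolding half_space_def by blast
  have "\<gamma> k \<subseteq> A k \<times> A k" using qo[OF kI] unfolding quasiorder_on_def by blast
  then have "\<not> A k \<times> A k \<subseteq> \<gamma> k" using k_nontriv by (metis subset_antisym)
  then obtain z where z: "z \<in> A k \<times> A k" "z \<notin> \<gamma> k" by (meson subsetI)
  obtain x y where "z = (x, y)" by (cases z)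
  with z have xy: "x \<in> A k" "y \<in> A k" "(x, y) \<notin> \<gamma> k" by auto
  have "PiE I A \<noteq> {}" using ne by (subst PiE_eq_empty_iff) blast
  then obtain e where e: "e \<in> PiE I A" by blast
  define p where "p = e(j := aj, k := y)"
  define q where "q = e(j := bj, k := x)"
  define r where "r = e(j := cj, k := y)"
  have eA: "\<And>i. i \<in> I \<Longrightarrow> e i \<in> A i" by (rule PiE_mem[OF e])
  have eU: "\<And>i. i \<notin> I \<Longrightarrow> e i = undefined" by (rule PiE_arb[OF e])
  have upd: "\<And>u v. u \<in> A j \<Longrightarrow> v \<in> A k \<Longrightarrow> e(j := u, k := v) \<in> PiE I A"
  proof -
    fix u v assume u: "u \<in> A j" and v: "v \<in> A k"
    show "e(j := u, k := v) \<in> PiE I A"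
    proof (rule PiE_I)
      fix i assume "i \<in> I" then show "(e(j := u, k := v)) i \<in> A i"
        using u v eA by (cases "i = k"; cases "i = j") simp_all
    next
      fix i assume "i \<notin> I" then show "(e(j := u, k := v)) i = undefined"
        using jI kI eU by (cases "i = k"; cases "i = j") simp_all
    qed
  qed
  have pP: "p \<in> PiE I A" unfolding p_def using upd abc xy by blast
  have qP: "q \<in> PiE I A" unfolding q_def using upd abc xy by blast
  have rP: "r \<in> PiE I A" unfolding r_def using upd abc xy by blast
  have refl: "\<And>i z. i \<in> I \<Longrightarrow> z \<in> A i \<Longrightarrow> (z, z) \<in> \<gamma> i"
    using qo unfolding quasiorder_on_def refl_on_def by blast
  have "\<forall>i\<in>I. (p i, r i) \<in> \<gamma> i"
  proof
    fix i assume iI: "i \<in> I"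
    show "(p i, r i) \<in> \<gamma> i"
    proof (cases "i = k")
      case True then show ?thesis using refl[OF kI xy(2)] by (simp add: p_def r_def)
    next
      case False
      show ?thesis
      proof (cases "i = j")
        case True then show ?thesis using ac False jk by (simp add: p_def r_def)
      next
        case F2: False
        then show ?thesis using False refl[OF iI eA[OF iI]] by (simp add: p_def r_def)
      qed
    qed
  qed
  then have pr: "(p, r) \<in> prod_qo I A \<gamma>"
    unfolding prod_qo_def using pP rP by blast
  have pq: "(p, q) \<notin> prod_qo I A \<gamma>"
  proof -
    have "(p j, q j) \<notin> \<gamma> j" using ab jk by (simp add: p_def q_def)
    then show ?thesis unfolding prod_qo_def using jI by blast
  qed
  have qr: "(q, r) \<notin> prod_qo I A \<gamma>"
  proof -
    have "(q k, r k) \<notin> \<gamma> k" using xy by (simp add: r_def q_def)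
    then show ?thesis unfolding prod_qo_def using kI by blast
  qed
  have "(p, q) \<in> prod_qo I A \<gamma> \<union> \<beta>" unfolding un using pP qP by simp
  with pq have "(p, q) \<in> \<beta>" by simp
  moreover have "(q, r) \<in> prod_qo I A \<gamma> \<union> \<beta>" unfolding un using qP rP by simp
  with qr have "(q, r) \<in> \<beta>" by simp
  moreover have "trans \<beta>" using bq unfolding quasiorder_on_def by simp
  ultimately have "(p, r) \<in> \<beta>" by (meson transD)
  with pr have "(p, r) \<in> Id_on (PiE I A)" unfolding it[symmetric] by simp
  then have "p = r" by (rule Id_onE) simp
  then have "p j = r j" by simp
  then show False using ac_ne jk by (simp add: p_def r_def)
qed

end
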